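(* Let $0<a<b<1$ with $a+b=1$, $m\in C^1([0,1])$ non-constant, $c\in C([0,1])$, and assume (H1), (H2) and $m\in S_{\mathcal{N}}$. Then $\limsup_{s\to+\infty}\lambda(s)\le\lambda^{\mathcal{N}}$.
   Context: Fix an integer $d\ge1$. $\lambda(s)$ denotes the principal eigenvalue of $-\varphi''-\frac{d-1}{r}\varphi'-2s\,m'(r)\varphi'+c(r)\varphi=\lambda\varphi$ on $(0,1)$, $\varphi'(0)=\varphi'(1)=0$; equivalently $\lambda(s)=\min\{\int_0^1 r^{d-1}e^{2sm}(|\varphi'|^2+c\varphi^2)dr:\ \varphi\in H^1((0,1)),\ \int_0^1 r^{d-1}e^{2sm}\varphi^2dr=1\}$. $\lambda^{\mathcal{D}}$ (resp. $\lambda^{\mathcal{N}}$) is the principal eigenvalue of $-\varphi''-\frac{d-1}{r}\varphi'+c\varphi=\lambda\varphi$ on $(a,b)$ with Dirichlet (resp. Neumann) boundary conditions, i.e. the minimum of $\int_a^b r^{d-1}(|\varphi'|^2+c\varphi^2)dr$ over $\varphi\in H^1_0((a,b))$ (resp. $H^1((a,b))$) with $\int_a^b r^{d-1}\varphi^2dr=1$. (H1): $m(r)=m(1-r)$ on $[0,1]$ and $m\equiv0$ on $[a,b]$, where $a+b=1$. (H2): $c>0$ on $[0,1]$ and $c(r)>\lambda^{\mathcal{D}}$ for $r\in[0,a]\cup[b,1]$. Step function $\bar m$: given $\delta\in(0,a)$, constants $0<h<\alpha<\beta<1<\nu$ and $l\in\mathbb{N}$ with $\sum_{i\ge1}(\alpha^{i+l}+\beta^{i+l})=a-\delta$,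 put $Y_0=\delta$, $Y_n=\delta+\sum_{i=1}^n(\alpha^{i+l}+\beta^{i+l})$ and $X_n=Y_n-\beta^{n+l}$ for $n\ge1$; define $\bar m(r)=h^n$ on $[Y_{n-1},X_n]$ and $\bar m(r)=-\nu h^n$ on $[X_n,Y_n]$ for $n\ge1$, and $\bar m(r)=\bar m(1-r)$ for $r\in[b,1-\delta]$. $S_{\mathcal{N}}$: the set of $m\in C^1([0,1])$ such that, for some such $\delta,h,\alpha,\beta,\nu,l$, $m'$ changes sign only finitely many times in $[0,\delta)\cup(1-\delta,1]$ and $m(r)\le\bar m(r)$ for all $r\in[\delta,a]\cup[b,1-\delta]$. *)

theory Defs
  imports "HOL-Analysis.Analysis"
begin

text \<open>One-dimensional H^1 on [u,v]: phi is (the absolutely continuous representative of)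
  an H^1 function with weak derivative g in L^2((u,v)).\<close>
definition H1_pair :: "real \<Rightarrow> real \<Rightarrow> (real \<Rightarrow> real) \<Rightarrow> (real \<Rightarrow> real) \<Rightarrow> bool" where
  "H1_pair u v phi g \<longleftrightarrow>
     set_integrable lborel {u..v} g \<and>
     set_integrable lborel {u..v} (\<lambda>x. (g x)^2) \<and>
     (\<forall>x\<in>{u..v}. phi x = phi u + (LINT t:{u..x}|lborel. g t))"

text \<open>Values of the weighted Rayleigh quotient over admissible normalized functions
  (P encodes boundary conditions, e.g. Dirichlet).\<close>
definition rayleigh_values ::
  "real \<Rightarrow> real \<Rightarrow> (real \<Rightarrow> real) \<Rightarrow> (real \<Rightarrow> real) \<Rightarrow> ((real \<Rightarrow> real) \<Rightarrow> bool) \<Rightarrow> real set" where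
  "rayleigh_values u v w c P =
     {LINT r:{u..v}|lborel. w r * ((g r)^2 + c r * (phi r)^2) | phi g.
        H1_pair u v phi g \<and> P phi \<and> (LINT r:{u..v}|lborel. w r * (phi r)^2) = 1}"

text \<open>lambda(s): principal eigenvalue with drift, via its variational characterization.\<close>
definition lam :: "nat \<Rightarrow> (real \<Rightarrow> real) \<Rightarrow> (real \<Rightarrow> real) \<Rightarrow> real \<Rightarrow> real" where
  "lam d m c s = Inf (rayleigh_values 0 1 (\<lambda>r. r^(d-1) * exp (2 * s * m r)) c (\<lambda>_. True))"

definition lamD :: "nat \<Rightarrow> (real \<Rightarrow> real) \<Rightarrow> real \<Rightarrow> real \<Rightarrow> real" where
  "lamD d c a b = Inf (rayleigh_values a b (\<lambda>r. r^(d-1)) c (\<lambda>phi. phi a = 0 \<and> phi b = 0))"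

definition lamN :: "nat \<Rightarrow> (real \<Rightarrow> real) \<Rightarrow> real \<Rightarrow> real \<Rightarrow> real" where
  "lamN d c a b = Inf (rayleigh_values a b (\<lambda>r. r^(d-1)) c (\<lambda>_. True))"

definition finite_sign_changes :: "(real \<Rightarrow> real) \<Rightarrow> real \<Rightarrow> real \<Rightarrow> bool" where
  "finite_sign_changes f u v \<longleftrightarrow>
     (\<exists>xs. xs \<noteq> [] \<and> sorted xs \<and> hd xs = u \<and> last xs = v \<and>
        (\<forall>i. Suc i < length xs \<longrightarrow>
           (\<forall>x\<in>{xs!i..xs!(Suc i)}. f x \<ge> 0) \<or> (\<forall>x\<in>{xs!i..xs!(Suc i)}. f x \<le> 0)))"

definition stepY :: "real \<Rightarrow> real \<Rightarrow> real \<Rightarrow> nat \<Rightarrow> nat \<Rightarrow> real" where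
  "stepY \<delta> \<alpha> \<beta> l n = \<delta> + (\<Sum>i=1..n. \<alpha>^(i+l) + \<beta>^(i+l))"

definition stepX :: "real \<Rightarrow> real \<Rightarrow> real \<Rightarrow> nat \<Rightarrow> nat \<Rightarrow> real" where
  "stepX \<delta> \<alpha> \<beta> l n = stepY \<delta> \<alpha> \<beta> l n - \<beta>^(n+l)"

text \<open>m \<le> mbar on [delta,a) and on (b,1-delta], where mbar = h^n on [Y_(n-1),X_n],
  mbar = -nu h^n on [X_n,Y_n], extended symmetrically by mbar(r) = mbar(1-r).\<close>
definition below_step :: "(real \<Rightarrow> real) \<Rightarrow> real \<Rightarrow> real \<Rightarrow> real \<Rightarrow> real \<Rightarrow> real \<Rightarrow> nat \<Rightarrow> bool" where
  "below_step m \<delta> h \<alpha> \<beta> \<nu> l \<longleftrightarrow>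
     (\<forall>n\<ge>1. (\<forall>r\<in>{stepY \<delta> \<alpha> \<beta> l (n-1)..stepX \<delta> \<alpha> \<beta> l n}. m r \<le> h^n \<and> m (1-r) \<le> h^n) \<and>
             (\<forall>r\<in>{stepX \<delta> \<alpha> \<beta> l n..stepY \<delta> \<alpha> \<beta> l n}. m r \<le> -\<nu>*h^n \<and> m (1-r) \<le> -\<nu>*h^n))"

definition in_SN :: "real \<Rightarrow> (real \<Rightarrow> real) \<Rightarrow> (real \<Rightarrow> real) \<Rightarrow> bool" where
  "in_SN a m m' \<longleftrightarrow>
     (\<exists>\<delta> h \<alpha> \<beta> \<nu> (l::nat).
        0 < \<delta> \<and> \<delta> < a \<and> 0 < h \<and> h < \<alpha> \<and> \<alpha> < \<beta> \<and> \<beta> < 1 \<and> 1 < \<nu> \<and>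
        ((\<lambda>i. \<alpha>^(Suc i + l) + \<beta>^(Suc i + l)) sums (a - \<delta>)) \<and>
        finite_sign_changes m' 0 \<delta> \<and> finite_sign_changes m' (1-\<delta>) 1 \<and>
        below_step m \<delta> h \<alpha> \<beta> \<nu> l)"

end

theory Submission
  imports Defs
begin


lemma ind_restrict:
  fixes f :: "real \<Rightarrow> real"
  assumes "S \<subseteq> T"
  shows "set_integrable lborel T (\<lambda>x. indicator S x * f x) \<longleftrightarrow> set_integrable lborel S f"
    and "(LINT x:T|lborel. indicator S x * f x) = (LINT x:S|lborel. f x)"
proof -
  have e: "(\<lambda>x. indicator T x *\<^sub>R (indicator S x * f x)) = (\<lambda>x. indicator S x *\<^sub>R f x)"
    using assms by (intro ext) (auto split: split_indicator)
  show "set_integrable lborel T (\<lambda>x. indicator S x * f x) \<longleftrightarrow> set_integrable lborel S f"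
    unfolding set_integrable_def e ..
  show "(LINT x:T|lborel. indicator S x * f x) = (LINT x:S|lborel. f x)"
    unfolding set_lebesgue_integral_def e ..
qed

lemma const_int:
  fixes u v K :: real
  assumes "u \<le> v"
  shows "set_integrable lborel {u..v} (\<lambda>_. K)" and "(LINT x:{u..v}|lborel. K) = K * (v - u)"
proof -
  show i: "set_integrable lborel {u..v} (\<lambda>_. K)"
    unfolding set_integrable_def by (rule borel_integrable_compact) auto
  show "(LINT x:{u..v}|lborel. K) = K * (v - u)"
    using set_borel_integral_eq_integral(2)[OF i] assms by simp
qed

lemma piece_lin:
  fixes g phi :: "real \<Rightarrow> real"
  assumes "u \<le> v" "\<And>y. u < y \<Longrightarrow> y < v \<Longrightarrow> g y = k"
    "\<And>x. x \<in> {u..v} \<Longrightarrow> phi x = phi u + k * (x - u)"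
  shows "g integrable_on {u..v} \<and> (\<forall>x\<in>{u..v}. phi x = phi u + integral {u..x} g)"
proof
  show "g integrable_on {u..v}"
    by (rule integrable_spike[where S="{u,v}" and f="\<lambda>_. k"]) (auto intro: assms(2))
  show "\<forall>x\<in>{u..v}. phi x = phi u + integral {u..x} g"
  proof
    fix x assume x: "x \<in> {u..v}"
    have "integral {u..x} g = integral {u..x} (\<lambda>_. k)"
      by (rule integral_spike[where S="{u,x}"]) (use x assms(2) in \<open>force+\<close>)
    also have "\<dots> = k * (x - u)" using x by simp
    finally show "phi x = phi u + integral {u..x} g" using assms(3)[OF x] by simp
  qed
qed

lemma H1_facts:
  assumes "H1_pair u v phi g"
  shows "g integrable_on {u..v}" "\<forall>x\<in>{u..v}. phi x = phi u + integral {u..x} g"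
    "continuous_on {u..v} phi"
proof -
  have si: "set_integrable lborel {u..v} g" using assms unfolding H1_pair_def by blast
  show gi: "g integrable_on {u..v}" using set_borel_integral_eq_integral(1)[OF si] .
  have eq: "\<forall>x\<in>{u..v}. phi x = phi u + (LINT t:{u..x}|lborel. g t)"
    using assms unfolding H1_pair_def by blast
  show *: "\<forall>x\<in>{u..v}. phi x = phi u + integral {u..x} g"
  proof
    fix x assume x: "x \<in> {u..v}"
    have "set_integrable lborel {u..x} g"
      by (rule set_integrable_subset[OF si]) (use x in auto)
    then show "phi x = phi u + integral {u..x} g"
      using eq x set_borel_integral_eq_integral(2) by metis
  qed
  have "continuous_on {u..v} (\<lambda>x. phi u + integral {u..x} g)"
    by (intro continuous_intros indefinite_integral_continuous_1 gi)
  then show "continuous_on {u..v} phi"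
    using * by (metis (no_types, lifting) continuous_on_cong)
qed

lemma piece_H1:
  fixes g phi psi g0 :: "real \<Rightarrow> real"
  assumes "H1_pair u v psi g0" "\<And>y. u < y \<Longrightarrow> y \<le> v \<Longrightarrow> g y = g0 y"
    "\<And>x. x \<in> {u..v} \<Longrightarrow> phi x = psi x"
  shows "g integrable_on {u..v} \<and> (\<forall>x\<in>{u..v}. phi x = phi u + integral {u..x} g)"
proof
  note F = H1_facts[OF assms(1)]
  have sp: "g y = g0 y" if "y \<in> {u..v} - {u}" for y
    using that assms(2)[of y] by auto
  show "g integrable_on {u..v}"
    by (rule integrable_spike[where S="{u}" and f="g0"]) (use F(1) sp in auto)
  show "\<forall>x\<in>{u..v}. phi x = phi u + integral {u..x} g"
  proof
    fix x assume x: "x \<in> {u..v}"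
    have sp2: "g0 y = g y" if "y \<in> {u..x} - {u}" for y
      using that x sp[of y] by auto
    have "integral {u..x} g = integral {u..x} g0"
      by (rule integral_spike[where S="{u}"]) (use sp2 in auto)
    moreover have "psi x = psi u + integral {u..x} g0" using F(2) x by blast
    moreover have "u \<in> {u..v}" using x by auto
    ultimately show "phi x = phi u + integral {u..x} g"
      using x assms(3)[of x] assms(3)[of u] by simp
  qed
qed

lemma glue:
  fixes g phi :: "real \<Rightarrow> real"
  assumes "u \<le> v" "v \<le> w"
    "g integrable_on {u..v} \<and> (\<forall>x\<in>{u..v}. phi x = phi u + integral {u..x} g)"
    "g integrable_on {v..w} \<and> (\<forall>x\<in>{v..w}. phi x = phi v + integral {v..x} g)"
  shows "g integrable_on {u..w} \<and> (\<forall>x\<in>{u..w}. phi x = phi u + integral {u..x} g)"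
proof
  have i1: "g integrable_on {u..v}" and i2: "g integrable_on {v..w}" using assms(3,4) by blast+
  show gi: "g integrable_on {u..w}" by (rule Henstock_Kurzweil_Integration.integrable_combine[OF assms(1,2) i1 i2])
  show "\<forall>x\<in>{u..w}. phi x = phi u + integral {u..x} g"
  proof
    fix x assume x: "x \<in> {u..w}"
    show "phi x = phi u + integral {u..x} g"
    proof (cases "x \<le> v")
      case True then have "x \<in> {u..v}" using x by auto
      then show ?thesis using assms(3) by blast
    next
      case False
      have gx: "g integrable_on {u..x}"
        by (rule integrable_on_subinterval[OF gi]) (use x in auto)
      have c: "integral {u..v} g + integral {v..x} g = integral {u..x} g"
        by (rule Henstock_Kurzweil_Integration.integral_combine[OF assms(1) _ gx]) (use False in auto)
      have "x \<in> {v..w}" using x False by auto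
      then have e1: "phi x = phi v + integral {v..x} g" using assms(4) by blast
      have "v \<in> {u..v}" using assms(1) by auto
      then have e2: "phi v = phi u + integral {u..v} g" using assms(3) by blast
      show ?thesis using e1 e2 c by linarith
    qed
  qed
qed

lemma HK_to_H1:
  fixes g phi :: "real \<Rightarrow> real"
  assumes "set_integrable lborel {u..v} g" "set_integrable lborel {u..v} (\<lambda>x. (g x)^2)"
    "\<forall>x\<in>{u..v}. phi x = phi u + integral {u..x} g"
  shows "H1_pair u v phi g"
  unfolding H1_pair_def
proof (intro conjI assms(1,2) ballI)
  fix x assume x: "x \<in> {u..v}"
  have "set_integrable lborel {u..x} g"
    by (rule set_integrable_subset[OF assms(1)]) (use x in auto)
  then show "phi x = phi u + (LINT t:{u..x}|lborel. g t)"
    using assms(3) x set_borel_integral_eq_integral(2) by metis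
qed

lemma H1_scale:
  assumes "H1_pair u v phi g"
  shows "H1_pair u v (\<lambda>x. k * phi x) (\<lambda>x. k * g x)"
proof -
  have a: "set_integrable lborel {u..v} g" "set_integrable lborel {u..v} (\<lambda>x. (g x)^2)"
    "\<forall>x\<in>{u..v}. phi x = phi u + (LINT t:{u..x}|lborel. g t)"
    using assms unfolding H1_pair_def by blast+
  have b: "set_integrable lborel {u..v} (\<lambda>x. k^2 * (g x)^2)" using a(2) by auto
  have c: "(\<lambda>x. (k * g x)^2) = (\<lambda>x. k^2 * (g x)^2)" by (simp add: power_mult_distrib)
  have d: "k * phi x = k * phi u + (LINT t:{u..x}|lborel. k * g t)" if "x \<in> {u..v}" for x
  proof -
    have "phi x = phi u + (LINT t:{u..x}|lborel. g t)" using a(3) that by blast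
    then show ?thesis by (simp add: algebra_simps)
  qed
  have e: "set_integrable lborel {u..v} (\<lambda>x. k * g x)"
    using a(1) by (rule set_integrable_mult_right)
  show ?thesis unfolding H1_pair_def c
    using e b d by blast
qed



definition phiF :: "real \<Rightarrow> real \<Rightarrow> real \<Rightarrow> real \<Rightarrow> (real \<Rightarrow> real) \<Rightarrow> real \<Rightarrow> real" where
  "phiF X Y a b psi x = (if x \<le> X then 0 else if x \<le> Y then psi a * (x - X) / (Y - X)
     else if x \<le> a then psi a else if x \<le> b then psi x else if x \<le> 1 - Y then psi b
     else if x \<le> 1 - X then psi b * ((1 - X) - x) / (Y - X) else 0)"

definition gF :: "real \<Rightarrow> real \<Rightarrow> real \<Rightarrow> real \<Rightarrow> (real \<Rightarrow> real) \<Rightarrow> (real \<Rightarrow> real) \<Rightarrow> real \<Rightarrow> real" where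
  "gF X Y a b psi g0 x = indicator {X<..Y} x * (psi a / (Y - X)) + indicator {a<..b} x * g0 x
     - indicator {1-Y<..1-X} x * (psi b / (Y - X))"

lemma construct:
  fixes X Y a b :: real and psi g0 :: "real \<Rightarrow> real"
  assumes o: "0 \<le> X" "X < Y" "Y \<le> a" "a < b" "b \<le> 1 - Y" and H: "H1_pair a b psi g0"
  shows "H1_pair 0 1 (phiF X Y a b psi) (gF X Y a b psi g0)"
proof -
  define phi where "phi = phiF X Y a b psi"
  define g where "g = gF X Y a b psi g0"
  have YX: "Y - X > 0" using o by simp
  have p1: "g integrable_on {0..X} \<and> (\<forall>x\<in>{0..X}. phi x = phi 0 + integral {0..x} g)"
  proof (rule piece_lin[where k=0])
    show "g y = 0" if "0 < y" "y < X" for y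
      using that o unfolding g_def gF_def by (auto split: split_indicator)
    show "phi x = phi 0 + 0 * (x - 0)" if "x \<in> {0..X}" for x
      using that o unfolding phi_def phiF_def by auto
  qed (use o in auto)
  have p2: "g integrable_on {X..Y} \<and> (\<forall>x\<in>{X..Y}. phi x = phi X + integral {X..x} g)"
  proof (rule piece_lin[where k="psi a / (Y - X)"])
    show "g y = psi a / (Y - X)" if "X < y" "y < Y" for y
      using that o unfolding g_def gF_def by (auto split: split_indicator)
    show "phi x = phi X + psi a / (Y - X) * (x - X)" if "x \<in> {X..Y}" for x
      using that o unfolding phi_def phiF_def by auto
  qed (use o in auto)
  have p3: "g integrable_on {Y..a} \<and> (\<forall>x\<in>{Y..a}. phi x = phi Y + integral {Y..x} g)"
  proof (rule piece_lin[where k=0])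
    show "g y = 0" if "Y < y" "y < a" for y
      using that o unfolding g_def gF_def by (auto split: split_indicator)
    show "phi x = phi Y + 0 * (x - Y)" if "x \<in> {Y..a}" for x
      using that o YX unfolding phi_def phiF_def by auto
  qed (use o in auto)
  have p4: "g integrable_on {a..b} \<and> (\<forall>x\<in>{a..b}. phi x = phi a + integral {a..x} g)"
  proof (rule piece_H1[OF H])
    show "g y = g0 y" if "a < y" "y \<le> b" for y
      using that o unfolding g_def gF_def by (auto split: split_indicator)
    show "phi x = psi x" if "x \<in> {a..b}" for x
    proof (cases "x = a")
      case True then show ?thesis
        using o YX unfolding phi_def phiF_def by auto
    next
      case False then show ?thesis
        using that o unfolding phi_def phiF_def by auto
    qed
  qed
  have p5: "g integrable_on {b..1-Y} \<and> (\<forall>x\<in>{b..1-Y}. phi x = phi b + integral {b..x} g)"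
  proof (rule piece_lin[where k=0])
    show "g y = 0" if "b < y" "y < 1-Y" for y
      using that o unfolding g_def gF_def by (auto split: split_indicator)
    show "phi x = phi b + 0 * (x - b)" if "x \<in> {b..1-Y}" for x
      using that o YX unfolding phi_def phiF_def by auto
  qed (use o in auto)
  have p6: "g integrable_on {1-Y..1-X} \<and> (\<forall>x\<in>{1-Y..1-X}. phi x = phi (1-Y) + integral {1-Y..x} g)"
  proof (rule piece_lin[where k="- (psi b / (Y - X))"])
    show "g y = - (psi b / (Y - X))" if "1-Y < y" "y < 1-X" for y
      using that o unfolding g_def gF_def by (auto split: split_indicator)
    have v: "phi (1-Y) = psi b"
      using o YX unfolding phi_def phiF_def by auto
    show "phi x = phi (1-Y) + - (psi b / (Y - X)) * (x - (1-Y))" if "x \<in> {1-Y..1-X}" for x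
    proof (cases "x = 1 - Y")
      case True then show ?thesis using v by simp
    next
      case False
      then have "phi x = psi b * ((1 - X) - x) / (Y - X)"
        using that o unfolding phi_def phiF_def by auto
      then show ?thesis using v YX by (simp add: field_simps)
    qed
  qed (use o in auto)
  have p7: "g integrable_on {1-X..1} \<and> (\<forall>x\<in>{1-X..1}. phi x = phi (1-X) + integral {1-X..x} g)"
  proof (rule piece_lin[where k=0])
    show "g y = 0" if "1-X < y" "y < 1" for y
      using that o unfolding g_def gF_def by (auto split: split_indicator)
    have v: "phi (1-X) = 0"
      using o YX unfolding phi_def phiF_def by auto
    show "phi x = phi (1-X) + 0 * (x - (1-X))" if "x \<in> {1-X..1}" for x
      using that o v unfolding phi_def phiF_def by auto
  qed (use o in auto)
  have all: "g integrable_on {0..1} \<and> (\<forall>x\<in>{0..1}. phi x = phi 0 + integral {0..x} g)"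
  proof -
    have "1 - X \<le> 1" using o by simp
    have r2: "g integrable_on {0..Y} \<and> (\<forall>x\<in>{0..Y}. phi x = phi 0 + integral {0..x} g)"
      by (rule glue[OF _ _ p1 p2]) (use o in auto)
    have r3: "g integrable_on {0..a} \<and> (\<forall>x\<in>{0..a}. phi x = phi 0 + integral {0..x} g)"
      by (rule glue[OF _ _ r2 p3]) (use o in auto)
    have r4: "g integrable_on {0..b} \<and> (\<forall>x\<in>{0..b}. phi x = phi 0 + integral {0..x} g)"
      by (rule glue[OF _ _ r3 p4]) (use o in auto)
    have r5: "g integrable_on {0..1-Y} \<and> (\<forall>x\<in>{0..1-Y}. phi x = phi 0 + integral {0..x} g)"
      by (rule glue[OF _ _ r4 p5]) (use o in auto)
    have r6: "g integrable_on {0..1-X} \<and> (\<forall>x\<in>{0..1-X}. phi x = phi 0 + integral {0..x} g)"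
      by (rule glue[OF _ _ r5 p6]) (use o in auto)
    show ?thesis
      by (rule glue[OF _ _ r6 p7]) (use o in auto)
  qed
  have sq: "(\<lambda>x. (g x)^2) = (\<lambda>x. indicator {X<..Y} x * (psi a / (Y - X))^2 + indicator {a<..b} x * (g0 x)^2
     + indicator {1-Y<..1-X} x * (psi b / (Y - X))^2)"
    using o unfolding g_def gF_def by (intro ext) (auto split: split_indicator simp: power2_eq_square)
  have c1: "set_integrable lborel {0..1} (\<lambda>x. indicator {X<..Y} x * K)" for K :: real
  proof -
    have "set_integrable lborel {X<..Y} (\<lambda>_. K)"
      by (rule set_integrable_subset[OF const_int(1)[of X Y K]]) (use o in auto)
    moreover have s: "{X<..Y} \<subseteq> {0..1}" using o by auto
    ultimately show ?thesis using ind_restrict(1)[OF s, of "\<lambda>_. K"] by simp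
  qed
  have c3: "set_integrable lborel {0..1} (\<lambda>x. indicator {1-Y<..1-X} x * K)" for K :: real
  proof -
    have "set_integrable lborel {1-Y<..1-X} (\<lambda>_. K)"
      by (rule set_integrable_subset[OF const_int(1)[of "1-Y" "1-X" K]]) (use o in auto)
    moreover have s: "{1-Y<..1-X} \<subseteq> {0..1}" using o by auto
    ultimately show ?thesis using ind_restrict(1)[OF s, of "\<lambda>_. K"] by simp
  qed
  have Hs: "set_integrable lborel {a..b} g0" "set_integrable lborel {a..b} (\<lambda>x. (g0 x)^2)"
    using H unfolding H1_pair_def by blast+
  have c2: "set_integrable lborel {0..1} (\<lambda>x. indicator {a<..b} x * g0 x)"
  proof -
    have "set_integrable lborel {a<..b} g0"
      by (rule set_integrable_subset[OF Hs(1)]) auto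
    moreover have s: "{a<..b} \<subseteq> {0..1}" using o by auto
    ultimately show ?thesis using ind_restrict(1)[OF s, of g0] by simp
  qed
  have c2': "set_integrable lborel {0..1} (\<lambda>x. indicator {a<..b} x * (g0 x)^2)"
  proof -
    have "set_integrable lborel {a<..b} (\<lambda>x. (g0 x)^2)"
      by (rule set_integrable_subset[OF Hs(2)]) auto
    moreover have s: "{a<..b} \<subseteq> {0..1}" using o by auto
    ultimately show ?thesis using ind_restrict(1)[OF s, of "\<lambda>x. (g0 x)^2"] by simp
  qed
  have gi: "set_integrable lborel {0..1} g"
    unfolding g_def gF_def
    by (intro set_integral_add(1) set_integral_diff(1) c1 c2 c3)
  have g2i: "set_integrable lborel {0..1} (\<lambda>x. (g x)^2)"
    unfolding sq by (intro set_integral_add(1) c1 c2' c3)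
  show ?thesis
    using HK_to_H1[OF gi g2i] all unfolding phi_def g_def by blast
qed



lemma set_nonneg:
  fixes f :: "'a \<Rightarrow> real"
  assumes "\<And>x. x \<in> A \<Longrightarrow> 0 \<le> f x"
  shows "0 \<le> (LINT x:A|M. f x)"
  unfolding set_lebesgue_integral_def
  by (rule Bochner_Integration.integral_nonneg) (use assms in \<open>auto split: split_indicator\<close>)

lemma set_le_nonint:
  fixes f G :: "'a \<Rightarrow> real"
  assumes "set_integrable M A G" "\<And>x. x \<in> A \<Longrightarrow> f x \<le> G x" "\<And>x. x \<in> A \<Longrightarrow> 0 \<le> f x"
  shows "(LINT x:A|M. f x) \<le> (LINT x:A|M. G x)"
proof (cases "set_integrable M A f")
  case True then show ?thesis using set_integral_mono[OF True assms(1,2)] by blast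
next
  case False
  then have "(LINT x:A|M. f x) = 0"
    unfolding set_integrable_def set_lebesgue_integral_def by (rule not_integrable_integral_eq)
  moreover have "0 \<le> (LINT x:A|M. G x)"
    by (rule set_nonneg) (use assms(2,3) in force)
  ultimately show ?thesis by simp
qed

lemma V_integrable:
  fixes psi g0 c :: "real \<Rightarrow> real"
  assumes H: "H1_pair a b psi g0" and ab: "0 < a" "a < b" and cc: "continuous_on {a..b} c"
  shows "set_integrable lborel {a..b} (\<lambda>r. r^(d-1) * ((g0 r)^2 + c r * (psi r)^2))"
proof -
  have Hs: "set_integrable lborel {a..b} (\<lambda>x. (g0 x)^2)"
    using H unfolding H1_pair_def by blast
  have pc: "continuous_on {a..b} psi" using H1_facts(3)[OF H] .
  have i2: "set_integrable lborel {a..b} (\<lambda>r. r^(d-1) * (c r * (psi r)^2))"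
    unfolding set_integrable_def
    by (rule borel_integrable_compact) (auto intro!: continuous_intros pc cc)
  have meas: "(\<lambda>x. indicator {a..b} x *\<^sub>R (g0 x)^2) \<in> borel_measurable lborel"
    using Hs unfolding set_integrable_def by (rule borel_measurable_integrable)
  have meas2: "(\<lambda>x. x^(d-1) * (indicator {a..b} x *\<^sub>R (g0 x)^2)) \<in> borel_measurable lborel"
    using meas by measurable
  have i1: "set_integrable lborel {a..b} (\<lambda>r. r^(d-1) * (g0 r)^2)"
    unfolding set_integrable_def
  proof (rule Bochner_Integration.integrable_bound)
    show "integrable lborel (\<lambda>x. b^(d-1) * (indicator {a..b} x *\<^sub>R (g0 x)^2))"
      using Hs unfolding set_integrable_def by simp
    show "(\<lambda>x. indicator {a..b} x *\<^sub>R (x^(d-1) * (g0 x)^2)) \<in> borel_measurable lborel"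
      using meas2 by (simp add: mult.left_commute)
    show "AE x in lborel. norm (indicator {a..b} x *\<^sub>R (x^(d-1) * (g0 x)^2))
        \<le> norm (b^(d-1) * (indicator {a..b} x *\<^sub>R (g0 x)^2))"
    proof (rule AE_I2)
      fix x
      show "norm (indicator {a..b} x *\<^sub>R (x^(d-1) * (g0 x)^2))
        \<le> norm (b^(d-1) * (indicator {a..b} x *\<^sub>R (g0 x)^2))"
      proof (cases "x \<in> {a..b}")
        case True
        then have "x^(d-1) \<le> b^(d-1)" using ab by (intro power_mono) auto
        moreover have "0 \<le> x^(d-1)" using True ab by simp
        ultimately show ?thesis using True by (simp add: abs_mult mult_right_mono)
      qed simp
    qed
  qed
  have "set_integrable lborel {a..b} (\<lambda>r. r^(d-1) * (g0 r)^2 + r^(d-1) * (c r * (psi r)^2))"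
    by (rule set_integral_add(1)[OF i1 i2])
  then show ?thesis by (simp add: algebra_simps)
qed



lemma num_bound:
  fixes X Y a b e1 e2 C :: real and psi g0 c w :: "real \<Rightarrow> real" and d :: nat
  assumes o: "0 \<le> X" "X < Y" "Y < a" "a < b" "a + b = 1"
    and H: "H1_pair a b psi g0"
    and cc: "continuous_on {0..1} c" "\<forall>r\<in>{0..1}. 0 < c r \<and> c r \<le> C"
    and w0: "\<forall>r\<in>{0..1}. 0 \<le> w r"
    and w1: "\<forall>r\<in>{a..b}. w r = r^(d-1)"
    and w2: "\<forall>r\<in>{X..Y} \<union> {1-Y..1-X}. w r \<le> e1"
    and w3: "\<forall>r\<in>{Y..a} \<union> {b..1-Y}. w r \<le> e2"
  shows "(LINT r:{0..1}|lborel. w r * ((gF X Y a b psi g0 r)^2 + c r * (phiF X Y a b psi r)^2))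
     \<le> (LINT r:{a..b}|lborel. r^(d-1) * ((g0 r)^2 + c r * (psi r)^2))
       + (Y-X) * (e1 * ((psi a/(Y-X))^2 + C*(psi a)^2)) + (a-Y)*(e2*(C*(psi a)^2))
       + (a-Y)*(e2*(C*(psi b)^2)) + (Y-X)*(e1*((psi b/(Y-X))^2 + C*(psi b)^2))"
proof -
  define phi where "phi = phiF X Y a b psi"
  define g where "g = gF X Y a b psi g0"
  define v where "v = (\<lambda>r. r^(d-1) * ((g0 r)^2 + c r * (psi r)^2))"
  define K1 where "K1 = e1 * ((psi a/(Y-X))^2 + C*(psi a)^2)"
  define K2 where "K2 = e2*(C*(psi a)^2)"
  define K3 where "K3 = e2*(C*(psi b)^2)"
  define K4 where "K4 = e1*((psi b/(Y-X))^2 + C*(psi b)^2)"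
  define f where "f = (\<lambda>r. w r * ((g r)^2 + c r * (phi r)^2))"
  define F where "F = (\<lambda>r. indicator {a..b} r * v r + indicator {X..Y} r * K1 + indicator {Y..a} r * K2
      + indicator {b..1-Y} r * K3 + indicator {1-Y..1-X} r * K4)"
  have YX: "Y - X > 0" using o by simp
  have b1: "b = 1 - a" using o by simp
  have C0: "0 \<le> C"
  proof -
    have "0 < c 0" "c 0 \<le> C" using cc(2) by auto
    then show ?thesis by linarith
  qed
  have e10: "0 \<le> e1"
  proof -
    have "X \<in> {0..1}" "X \<in> {X..Y} \<union> {1-Y..1-X}" using o b1 by auto
    then have "0 \<le> w X" "w X \<le> e1" using w0 w2 by blast+
    then show ?thesis by linarith
  qed
  have e20: "0 \<le> e2"
  proof -
    have "Y \<in> {0..1}" "Y \<in> {Y..a} \<union> {b..1-Y}" using o b1 by auto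
    then have "0 \<le> w Y" "w Y \<le> e2" using w0 w3 by blast+
    then show ?thesis by linarith
  qed
  have K0: "0 \<le> K1" "0 \<le> K2" "0 \<le> K3" "0 \<le> K4"
    unfolding K1_def K2_def K3_def K4_def using C0 e10 e20 by auto
  have v0: "0 \<le> v r" if "r \<in> {a..b}" for r
  proof -
    have "0 < c r" using cc(2) that o b1 by auto
    then show ?thesis unfolding v_def using that o by (auto intro!: mult_nonneg_nonneg add_nonneg_nonneg)
  qed
  have vi: "set_integrable lborel {a..b} v"
    unfolding v_def by (rule V_integrable[OF H]) (use o cc(1) in \<open>auto intro: continuous_on_subset\<close>)
  have sub: "{a..b} \<subseteq> {0..1}" "{X..Y} \<subseteq> {0..1}" "{Y..a} \<subseteq> {0..1}" "{b..1-Y} \<subseteq> {0..1}"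
    "{1-Y..1-X} \<subseteq> {0..1}" using o b1 by auto
  have i1: "set_integrable lborel {0..1} (\<lambda>r. indicator {a..b} r * v r)"
    using ind_restrict(1)[OF sub(1)] vi by simp
  have cint: "set_integrable lborel {0..1} (\<lambda>r. indicator {u..u'} r * K)"
    "(LINT r:{0..1}|lborel. indicator {u..u'} r * K) = K * (u' - u)"
    if "{u..u'} \<subseteq> {0..1}" "u \<le> u'" for u u' K :: real
    using ind_restrict[OF that(1), of "\<lambda>_. K"] const_int[OF that(2), of K] by simp_all
  define T1 where "T1 = (\<lambda>r. indicator {a..b} r * v r)"
  define T2 where "T2 = (\<lambda>r. indicator {X..Y} r * K1)"
  define T3 where "T3 = (\<lambda>r. indicator {Y..a} r * K2)"
  define T4 where "T4 = (\<lambda>r. indicator {b..1-Y} r * K3)"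
  define T5 where "T5 = (\<lambda>r. indicator {1-Y..1-X} r * K4)"
  have I1: "set_integrable lborel {0..1} T1" unfolding T1_def by (rule i1)
  have I2: "set_integrable lborel {0..1} T2" "(LINT r:{0..1}|lborel. T2 r) = K1 * (Y - X)"
    unfolding T2_def using cint[OF sub(2)] o by auto
  have I3: "set_integrable lborel {0..1} T3" "(LINT r:{0..1}|lborel. T3 r) = K2 * (a - Y)"
    unfolding T3_def using cint[OF sub(3)] o by auto
  have I4: "set_integrable lborel {0..1} T4" "(LINT r:{0..1}|lborel. T4 r) = K3 * ((1-Y) - b)"
    unfolding T4_def using cint[OF sub(4)] o b1 by auto
  have I5: "set_integrable lborel {0..1} T5" "(LINT r:{0..1}|lborel. T5 r) = K4 * ((1-X) - (1-Y))"
    unfolding T5_def using cint[OF sub(5)] o by auto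
  have I1v: "(LINT r:{0..1}|lborel. T1 r) = (LINT r:{a..b}|lborel. v r)"
    unfolding T1_def by (rule ind_restrict(2)[OF sub(1)])
  have J2: "set_integrable lborel {0..1} (\<lambda>r. T1 r + T2 r)"
    "(LINT r:{0..1}|lborel. T1 r + T2 r) = (LINT r:{0..1}|lborel. T1 r) + (LINT r:{0..1}|lborel. T2 r)"
    using set_integral_add[OF I1 I2(1)] by auto
  have J3: "set_integrable lborel {0..1} (\<lambda>r. T1 r + T2 r + T3 r)"
    "(LINT r:{0..1}|lborel. T1 r + T2 r + T3 r) = (LINT r:{0..1}|lborel. T1 r + T2 r) + (LINT r:{0..1}|lborel. T3 r)"
    using set_integral_add[OF J2(1) I3(1)] by auto
  have J4: "set_integrable lborel {0..1} (\<lambda>r. T1 r + T2 r + T3 r + T4 r)"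
    "(LINT r:{0..1}|lborel. T1 r + T2 r + T3 r + T4 r) = (LINT r:{0..1}|lborel. T1 r + T2 r + T3 r) + (LINT r:{0..1}|lborel. T4 r)"
    using set_integral_add[OF J3(1) I4(1)] by auto
  have J5: "set_integrable lborel {0..1} (\<lambda>r. T1 r + T2 r + T3 r + T4 r + T5 r)"
    "(LINT r:{0..1}|lborel. T1 r + T2 r + T3 r + T4 r + T5 r) = (LINT r:{0..1}|lborel. T1 r + T2 r + T3 r + T4 r) + (LINT r:{0..1}|lborel. T5 r)"
    using set_integral_add[OF J4(1) I5(1)] by auto
  have FT: "F = (\<lambda>r. T1 r + T2 r + T3 r + T4 r + T5 r)"
    unfolding F_def T1_def T2_def T3_def T4_def T5_def ..
  have Fi: "set_integrable lborel {0..1} F" unfolding FT by (rule J5(1))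
  have FI: "(LINT r:{0..1}|lborel. F r) = (LINT r:{a..b}|lborel. v r) + K1 * (Y - X) + K2 * (a - Y)
      + K3 * ((1-Y) - b) + K4 * ((1-X) - (1-Y))"
    unfolding FT J5(2) J4(2) J3(2) J2(2) I1v I2(2) I3(2) I4(2) I5(2) ..
  have Fge: "F r \<ge> indicator {a..b} r * v r" "F r \<ge> indicator {X..Y} r * K1" "F r \<ge> indicator {Y..a} r * K2"
     "F r \<ge> indicator {b..1-Y} r * K3" "F r \<ge> indicator {1-Y..1-X} r * K4" "0 \<le> F r" for r
  proof -
    have t: "0 \<le> indicator {a..b} r * v r" "0 \<le> indicator {X..Y} r * K1" "0 \<le> indicator {Y..a} r * K2"
     "0 \<le> indicator {b..1-Y} r * K3" "0 \<le> indicator {1-Y..1-X} r * K4"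
      using v0 K0 by (auto split: split_indicator)
    show "F r \<ge> indicator {a..b} r * v r" "F r \<ge> indicator {X..Y} r * K1" "F r \<ge> indicator {Y..a} r * K2"
     "F r \<ge> indicator {b..1-Y} r * K3" "F r \<ge> indicator {1-Y..1-X} r * K4"
      unfolding F_def using t by linarith+
    show "0 \<le> F r" unfolding F_def using t by linarith
  qed
  have f0: "0 \<le> f r" if "r \<in> {0..1}" for r
  proof -
    have "0 < c r" using cc(2) that by auto
    then show ?thesis unfolding f_def using w0 that by (auto intro!: mult_nonneg_nonneg add_nonneg_nonneg)
  qed
  have fle: "f r \<le> F r" if r: "r \<in> {0..1}" for r
  proof -
    have cr: "0 < c r" "c r \<le> C" using cc(2) r by auto
    have wr: "0 \<le> w r" using w0 r by auto
    have key: "w r * (G + c r * P) \<le> e * (G' + C * P')"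
      if "w r \<le> e" "0 \<le> G" "G \<le> G'" "0 \<le> P" "P \<le> P'" for e G G' P P' :: real
    proof -
      have "c r * P \<le> C * P'" using cr that by (intro mult_mono) auto
      then have "G + c r * P \<le> G' + C * P'" using that by linarith
      moreover have "0 \<le> G + c r * P" using that cr by auto
      ultimately show ?thesis using that wr by (intro mult_mono) auto
    qed
    consider "r \<le> X" | "X \<le> r \<and> r \<le> Y" | "Y < r \<and> r < a" | "a \<le> r \<and> r \<le> b"
      | "b < r \<and> r < 1 - Y" | "1 - Y \<le> r \<and> r \<le> 1 - X" | "1 - X < r" by linarith
    then show ?thesis
    proof cases
      case 1
      then have "phi r = 0" "g r = 0" using o b1 unfolding phi_def phiF_def g_def gF_def
        by (auto split: split_indicator)
      then have "f r = 0" unfolding f_def by simp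
      then show ?thesis using Fge(6)[of r] by simp
    next
      case 2
      have gr: "(g r)^2 \<le> (psi a/(Y-X))^2"
        using 2 o b1 unfolding g_def gF_def by (auto split: split_indicator)
      have pr: "(phi r)^2 \<le> (psi a)^2"
      proof (cases "r \<le> X")
        case True then show ?thesis using o unfolding phi_def phiF_def by auto
      next
        case False
        then have "phi r = psi a * ((r - X) / (Y - X))" using 2 unfolding phi_def phiF_def by auto
        define q where "q = (r - X) / (Y - X)"
        have qq: "phi r = psi a * q" unfolding q_def by fact
        have "0 \<le> q" "q \<le> 1" unfolding q_def using 2 YX by auto
        then have q2: "q^2 \<le> 1" by (simp add: power_le_one)
        have "(phi r)^2 = (psi a)^2 * q^2" unfolding qq by (simp add: power_mult_distrib)
        also have "\<dots> \<le> (psi a)^2" using q2 by (intro mult_left_le) auto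
        finally show ?thesis .
      qed
      have "w r \<le> e1" using w2 2 by auto
      then have "f r \<le> K1" unfolding f_def K1_def using gr pr by (intro key) auto
      then show ?thesis using Fge(2)[of r] 2 by auto
    next
      case 3
      then have "phi r = psi a" "g r = 0" using o b1 unfolding phi_def phiF_def g_def gF_def
        by (auto split: split_indicator)
      then have fr: "f r = w r * (c r * (psi a)^2)" unfolding f_def by simp
      have m1: "w r \<le> e2" using w3 3 by auto
      have m2: "c r * (psi a)^2 \<le> C * (psi a)^2" using cr by (intro mult_right_mono) auto
      have m3: "0 \<le> c r * (psi a)^2" using cr by simp
      have "f r \<le> K2" unfolding fr K2_def by (rule mult_mono[OF m1 m2 e20 m3])
      then show ?thesis using Fge(3)[of r] 3 by auto
    next
      case 4
      have pr: "phi r = psi r"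
      proof (cases "r = a")
        case True then show ?thesis using o unfolding phi_def phiF_def by auto
      next
        case False then show ?thesis using o 4 unfolding phi_def phiF_def by auto
      qed
      have gr: "(g r)^2 \<le> (g0 r)^2"
      proof (cases "r = a")
        case True then show ?thesis using o b1 unfolding g_def gF_def by (auto split: split_indicator)
      next
        case False then show ?thesis using o b1 4 unfolding g_def gF_def by (auto split: split_indicator)
      qed
      have rp: "0 \<le> r^(d-1)" using 4 o by simp
      have "f r \<le> v r" unfolding f_def v_def using w1 4 pr gr cr rp
        by (auto intro!: mult_left_mono)
      then show ?thesis using Fge(1)[of r] 4 by auto
    next
      case 5
      then have "phi r = psi b" "g r = 0" using o b1 unfolding phi_def phiF_def g_def gF_def
        by (auto split: split_indicator)
      then have fr: "f r = w r * (c r * (psi b)^2)" unfolding f_def by simp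
      have m1: "w r \<le> e2" using w3 5 by auto
      have m2: "c r * (psi b)^2 \<le> C * (psi b)^2" using cr by (intro mult_right_mono) auto
      have m3: "0 \<le> c r * (psi b)^2" using cr by simp
      have "f r \<le> K3" unfolding fr K3_def by (rule mult_mono[OF m1 m2 e20 m3])
      then show ?thesis using Fge(4)[of r] 5 by auto
    next
      case 6
      have gr: "(g r)^2 \<le> (psi b/(Y-X))^2"
        using 6 o b1 unfolding g_def gF_def by (auto split: split_indicator)
      have pr: "(phi r)^2 \<le> (psi b)^2"
      proof (cases "r \<le> 1 - Y")
        case True then have "r = 1 - Y" using 6 by simp
        then show ?thesis using o b1 unfolding phi_def phiF_def by auto
      next
        case False
        then have "phi r = psi b * (((1 - X) - r) / (Y - X))" using 6 o b1 unfolding phi_def phiF_def by auto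
        define q where "q = ((1 - X) - r) / (Y - X)"
        have qq: "phi r = psi b * q" unfolding q_def by fact
        have "0 \<le> q" "q \<le> 1" unfolding q_def using 6 YX False by auto
        then have q2: "q^2 \<le> 1" by (simp add: power_le_one)
        have "(phi r)^2 = (psi b)^2 * q^2" unfolding qq by (simp add: power_mult_distrib)
        also have "\<dots> \<le> (psi b)^2" using q2 by (intro mult_left_le) auto
        finally show ?thesis .
      qed
      have "w r \<le> e1" using w2 6 by auto
      then have "f r \<le> K4" unfolding f_def K4_def using gr pr by (intro key) auto
      then show ?thesis using Fge(5)[of r] 6 by auto
    next
      case 7
      then have "phi r = 0" "g r = 0" using o b1 r unfolding phi_def phiF_def g_def gF_def
        by (auto split: split_indicator)
      then have "f r = 0" unfolding f_def by simp
      then show ?thesis using Fge(6)[of r] by simp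
    qed
  qed
  have "(LINT r:{0..1}|lborel. f r) \<le> (LINT r:{0..1}|lborel. F r)"
    by (rule set_le_nonint[OF Fi fle f0])
  also have "\<dots> = (LINT r:{a..b}|lborel. v r) + K1 * (Y - X) + K2 * (a - Y)
      + K3 * (a - Y) + K4 * (Y - X)" unfolding FI using b1 by simp
  finally show ?thesis unfolding f_def phi_def g_def v_def K1_def K2_def K3_def K4_def
    by (simp add: algebra_simps)
qed



locale seqs =
  fixes \<delta> \<alpha> \<beta> a :: real and l :: nat
  assumes pa: "0 < \<alpha>" "\<alpha> < \<beta>" "\<beta> < 1"
    and sm: "(\<lambda>i. \<alpha>^(Suc i + l) + \<beta>^(Suc i + l)) sums (a - \<delta>)"
begin

definition t :: "nat \<Rightarrow> real" where "t i = \<alpha>^(Suc i + l) + \<beta>^(Suc i + l)"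

lemma t_pos: "0 < t i"
proof -
  have "0 < \<alpha>^(Suc i + l)" "0 < \<beta>^(Suc i + l)" using pa by simp_all
  then show ?thesis unfolding t_def by simp
qed

lemma t_sums: "t sums (a - \<delta>)" using sm unfolding t_def .

lemma t_summable: "summable t" using t_sums by (rule sums_summable)

lemma Y_eq: "stepY \<delta> \<alpha> \<beta> l n = \<delta> + (\<Sum>i<n. t i)"
  unfolding stepY_def t_def by (simp add: sum.atLeast1_atMost_eq)

lemma Y_Suc: "stepY \<delta> \<alpha> \<beta> l (Suc n) = stepY \<delta> \<alpha> \<beta> l n + t n"
  unfolding Y_eq by simp

lemma Y_mono: "m \<le> n \<Longrightarrow> stepY \<delta> \<alpha> \<beta> l m \<le> stepY \<delta> \<alpha> \<beta> l n"
proof (induction n)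
  case 0 then show ?case by simp
next
  case (Suc n)
  then show ?case using t_pos[of n] Y_Suc[of n]
    by (metis le_Suc_eq less_eq_real_def add_increasing2 order.trans add.commute le_add_same_cancel1)
qed

lemma Y_tail: "a - stepY \<delta> \<alpha> \<beta> l n = (\<Sum>j. t (j + n))"
proof -
  have "suminf t = (\<Sum>j. t (j + n)) + (\<Sum>i<n. t i)"
    by (rule suminf_split_initial_segment[OF t_summable])
  moreover have "suminf t = a - \<delta>" using t_sums by (rule sums_unique[symmetric])
  ultimately show ?thesis unfolding Y_eq by simp
qed

lemma Y_less: "stepY \<delta> \<alpha> \<beta> l n < a"
proof -
  have "summable (\<lambda>j. t (j + n))" using t_summable by (rule summable_ignore_initial_segment)
  then have "0 < (\<Sum>j. t (j + n))" by (rule suminf_pos) (rule t_pos)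
  then show ?thesis using Y_tail[of n] by simp
qed

lemma Y_tail_bound: "a - stepY \<delta> \<alpha> \<beta> l n \<le> 2 * \<beta>^(n+l+1) / (1 - \<beta>)"
proof -
  have b0: "0 < \<beta>" using pa by simp
  have s1: "summable (\<lambda>j. t (j + n))" using t_summable by (rule summable_ignore_initial_segment)
  have g: "(\<lambda>j. \<beta>^j) sums (1 / (1 - \<beta>))" using pa by (intro geometric_sums) auto
  then have g2: "(\<lambda>j. (2 * \<beta>^(n+l+1)) * \<beta>^j) sums ((2 * \<beta>^(n+l+1)) * (1 / (1 - \<beta>)))"
    by (rule sums_mult)
  have le: "t (j + n) \<le> (2 * \<beta>^(n+l+1)) * \<beta>^j" for j
  proof -
    have "\<alpha>^(Suc (j+n) + l) \<le> \<beta>^(Suc (j+n) + l)" using pa by (intro power_mono) auto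
    moreover have eq: "\<beta>^(Suc (j+n) + l) = \<beta>^(n+l+1) * \<beta>^j"
    proof -
      have e: "Suc (j+n) + l = (n+l+1) + j" by simp
      show ?thesis by (simp only: e power_add)
    qed
    ultimately have le2: "t (j + n) \<le> 2 * \<beta>^(Suc (j+n) + l)" unfolding t_def by simp
    have "t (j + n) \<le> 2 * (\<beta>^(n+l+1) * \<beta>^j)" using le2 unfolding eq .
    then show ?thesis by (simp only: mult.assoc)
  qed
  have "(\<Sum>j. t (j + n)) \<le> (2 * \<beta>^(n+l+1)) * (1 / (1 - \<beta>))"
    using suminf_le[OF le s1 sums_summable[OF g2]] sums_unique[OF g2] by simp
  then show ?thesis using Y_tail[of n] by simp
qed

lemma Y_lim: "(\<lambda>n. stepY \<delta> \<alpha> \<beta> l n) \<longlonglongrightarrow> a"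
proof -
  have "(\<lambda>n. \<Sum>i<n. t i) \<longlonglongrightarrow> a - \<delta>" using t_sums unfolding sums_def .
  then have "(\<lambda>n. \<delta> + (\<Sum>i<n. t i)) \<longlonglongrightarrow> \<delta> + (a - \<delta>)" by (intro tendsto_intros)
  then show ?thesis unfolding Y_eq by simp
qed

lemma X_eq: "n \<ge> 1 \<Longrightarrow> stepX \<delta> \<alpha> \<beta> l n = stepY \<delta> \<alpha> \<beta> l (n-1) + \<alpha>^(n+l)"
proof -
  assume "n \<ge> 1"
  then obtain k where k: "n = Suc k" by (cases n) auto
  show ?thesis unfolding stepX_def k using Y_Suc[of k] unfolding t_def by simp
qed

lemma find_k:
  assumes "stepY \<delta> \<alpha> \<beta> l n \<le> r" "r < a"
  shows "\<exists>k\<ge>n+1. stepY \<delta> \<alpha> \<beta> l (k-1) \<le> r \<and> r \<le> stepY \<delta> \<alpha> \<beta> l k"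
proof -
  have "eventually (\<lambda>k. r < stepY \<delta> \<alpha> \<beta> l k) sequentially"
    using Y_lim assms(2) by (rule order_tendstoD(1))
  then have ex: "\<exists>k. r < stepY \<delta> \<alpha> \<beta> l k" by (meson eventually_sequentially order.refl)
  define k where "k = (LEAST k. r < stepY \<delta> \<alpha> \<beta> l k)"
  have rk: "r < stepY \<delta> \<alpha> \<beta> l k" unfolding k_def using ex by (metis LeastI)
  have kn: "k \<ge> n + 1"
  proof (rule ccontr)
    assume "\<not> k \<ge> n + 1"
    then have "k \<le> n" by simp
    then have "stepY \<delta> \<alpha> \<beta> l k \<le> stepY \<delta> \<alpha> \<beta> l n" by (rule Y_mono)
    then show False using rk assms(1) by simp
  qed
  have "\<not> r < stepY \<delta> \<alpha> \<beta> l (k-1)" unfolding k_def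
    by (rule not_less_Least) (use kn k_def in auto)
  then show ?thesis using kn rk by (intro exI[of _ k]) auto
qed

end



lemma pow_exp: "0 < (x::real) \<Longrightarrow> x ^ k = exp (real k * ln x)"
  by (metis exp_ln exp_of_nat_mult)

lemma asym:
  fixes h \<beta> \<nu> P \<epsilon> A :: real and l :: nat
  assumes h: "0 < h" "h < 1" and b: "0 < \<beta>" "\<beta> < 1" and nu: "1 < \<nu>" and P: "0 \<le> P" and e: "0 < \<epsilon>"
  shows "\<exists>S>0. \<forall>s\<ge>S. \<exists>n\<ge>1. P * (exp (- 2 * s * \<nu> * h ^ n) / \<beta>^(n+l)
            + exp (2 * s * h ^ (n+1)) * (2*\<beta>^(n+l+1)/(1-\<beta>))) \<le> \<epsilon>"
proof -
  define Lb where "Lb = - ln \<beta>"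
  have Lb: "0 < Lb" unfolding Lb_def using b by simp
  define A where "A = Lb / (1 + \<nu>)"
  define \<kappa> where "\<kappa> = Lb * (\<nu> - 1) / (\<nu> + 1)"
  have A0: "0 < A" unfolding A_def using Lb nu by simp
  have k0: "0 < \<kappa>" unfolding \<kappa>_def using Lb nu by simp
  have id1: "2 * \<nu> * A - Lb = \<kappa>" unfolding A_def \<kappa>_def using nu by (simp add: field_simps)
  have id2: "Lb - 2 * A = \<kappa>" unfolding A_def \<kappa>_def using nu by (simp add: field_simps)
  have bpow: "\<beta> ^ k = exp (- (real k * Lb))" for k
    unfolding Lb_def using pow_exp[OF b(1)] by simp
  define Q where "Q = P * (1 + 2 / (1 - \<beta>))"
  have Q0: "0 \<le> Q" unfolding Q_def using P b by simp
  obtain N0 :: nat where N0: "N0 \<ge> 1" "Q / (\<kappa> * \<epsilon>) \<le> real N0"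
  proof -
    obtain N :: nat where "Q / (\<kappa> * \<epsilon>) \<le> real N" using real_arch_simple by blast
    then show ?thesis using that[of "N + 1"] by simp
  qed
  have QN: "Q / (\<kappa> * real n) \<le> \<epsilon>" if "N0 \<le> n" for n :: nat
  proof -
    have n0: "0 < real n" using N0 that by simp
    have "Q \<le> \<epsilon> * (\<kappa> * real N0)" using N0(2) k0 e by (simp add: field_simps)
    also have "\<dots> \<le> \<epsilon> * (\<kappa> * real n)" using that k0 e by (intro mult_left_mono) auto
    finally show ?thesis using n0 k0 by (simp add: field_simps)
  qed
  define S where "S = max (A * (1 + l) / h) (A * (N0 + 1 + l) / h ^ (N0 + 1))"
  have S0: "0 < S" unfolding S_def using A0 h by (simp add: less_max_iff_disj)
  have main: "\<exists>n\<ge>1. P * (exp (- 2 * s * \<nu> * h ^ n) / \<beta>^(n+l)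
            + exp (2 * s * h ^ (n+1)) * (2*\<beta>^(n+l+1)/(1-\<beta>))) \<le> \<epsilon>" if s: "S \<le> s" for s
  proof -
    have s0: "0 < s" using S0 s by simp
    define bad where "bad = (\<lambda>k::nat. s * h^k < A * (k + l))"
    have ex: "\<exists>k. bad k"
    proof -
      have "(\<lambda>k. h^k) \<longlonglongrightarrow> 0" using h by (intro LIMSEQ_power_zero) auto
      then have "eventually (\<lambda>k. h^k < A / s) sequentially"
        using A0 s0 by (intro order_tendstoD(2)) auto
      then obtain N where N: "\<And>k. k \<ge> N \<Longrightarrow> h^k < A / s" unfolding eventually_sequentially by blast
      have "h^(N+1) < A / s" using N[of "N+1"] by simp
      then have "s * h^(N+1) < A" using s0 by (simp add: field_simps)
      also have "A \<le> A * (real (N+1) + l)" using A0 by simp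
      finally show ?thesis unfolding bad_def by (intro exI[of _ "N+1"]) (simp add: add.assoc)
    qed
    define k0 where "k0 = (LEAST k. bad k)"
    have bk0: "bad k0" unfolding k0_def using ex by (metis LeastI)
    have sA: "A * (1 + l) \<le> s * h"
    proof -
      have "A * (1 + l) / h \<le> s" using s unfolding S_def by simp
      then show ?thesis using h by (simp add: field_simps)
    qed
    have nb0: "\<not> bad 0"
    proof -
      have "s * h \<le> s" using s0 h by simp
      moreover have "A * real l \<le> A * (1 + real l)" using A0 by simp
      ultimately show ?thesis unfolding bad_def using sA by simp
    qed
    have nb1: "\<not> bad 1" unfolding bad_def using sA by simp
    have k2: "k0 \<ge> 2"
    proof (rule ccontr)
      assume "\<not> k0 \<ge> 2"
      then have "k0 = 0 \<or> k0 = 1" by auto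
      then show False using bk0 nb0 nb1 by auto
    qed
    define n where "n = k0 - 1"
    have n1: "n \<ge> 1" and kn: "k0 = n + 1" using k2 unfolding n_def by auto
    have nbn: "\<not> bad n" unfolding k0_def n_def by (rule not_less_Least) (use k2 k0_def in auto)
    have bn1: "bad (n+1)" using bk0 kn by simp
    have low: "A * (n + l) \<le> s * h^n" using nbn unfolding bad_def by simp
    have up: "s * h^(n+1) < A * (n + 1 + l)" using bn1 unfolding bad_def by simp
    have nN: "N0 \<le> n"
    proof (rule ccontr)
      assume "\<not> N0 \<le> n"
      then have nl: "n + 1 \<le> N0" by simp
      have "h^(N0+1) \<le> h^(n+1)" using h nl by (intro power_decreasing) auto
      then have "s * h^(N0+1) \<le> s * h^(n+1)" using s0 by simp
      also have "\<dots> < A * (n + 1 + l)" by (rule up)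
      also have "\<dots> \<le> A * (N0 + 1 + l)" using nl A0 by simp
      finally have "s < A * (N0 + 1 + l) / h^(N0+1)" using h by (simp add: field_simps)
      moreover have "A * (N0 + 1 + l) / h^(N0+1) \<le> S" unfolding S_def by simp
      ultimately show False using s by simp
    qed
    have t1: "exp (- 2 * s * \<nu> * h ^ n) / \<beta>^(n+l) \<le> exp (- (\<kappa> * n))"
    proof -
      have "exp (- 2 * s * \<nu> * h ^ n) / \<beta>^(n+l) = exp (- 2 * s * \<nu> * h ^ n - (- (real (n+l) * Lb)))"
        unfolding bpow exp_diff ..
      also have "\<dots> = exp (- 2 * s * \<nu> * h ^ n + real (n+l) * Lb)" by simp
      also have "\<dots> \<le> exp (- (\<kappa> * n))"
      proof -
        have "2 * \<nu> * (A * (n + l)) \<le> 2 * \<nu> * (s * h^n)" using low nu by (intro mult_left_mono) auto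
        moreover have "- (2 * \<nu> * A - Lb) * (n + l) \<le> - (\<kappa> * n)"
        proof -
          have "- (2 * \<nu> * A - Lb) * (n + l) = - (\<kappa> * (n + l))" using id1 by (simp add: algebra_simps)
          moreover have "\<kappa> * n \<le> \<kappa> * (n + l)" using k0 by (intro mult_left_mono) auto
          ultimately show ?thesis by linarith
        qed
        ultimately have "- 2 * s * \<nu> * h ^ n + real (n+l) * Lb \<le> - (\<kappa> * n)"
          by (simp add: algebra_simps)
        then show ?thesis by simp
      qed
      finally show ?thesis .
    qed
    have t2: "exp (2 * s * h ^ (n+1)) * \<beta>^(n+l+1) \<le> exp (- (\<kappa> * n))"
    proof -
      have "exp (2 * s * h ^ (n+1)) * \<beta>^(n+l+1) = exp (2 * s * h ^ (n+1) + (- (real (n+l+1) * Lb)))"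
        unfolding bpow exp_add ..
      also have "\<dots> = exp (2 * s * h ^ (n+1) - real (n+l+1) * Lb)" by simp
      also have "\<dots> \<le> exp (- (\<kappa> * n))"
      proof -
        have "2 * (s * h^(n+1)) \<le> 2 * (A * (n + 1 + l))" using up by simp
        moreover have "(2 * A - Lb) * (n + 1 + l) \<le> - (\<kappa> * n)"
        proof -
          have "(2 * A - Lb) * (n + 1 + l) = - (\<kappa> * (n + 1 + l))" using id2 by (simp add: algebra_simps)
          moreover have "\<kappa> * n \<le> \<kappa> * (n + 1 + l)" using k0 by (intro mult_left_mono) auto
          ultimately show ?thesis by linarith
        qed
        ultimately have "2 * s * h ^ (n+1) - real (n+l+1) * Lb \<le> - (\<kappa> * n)"
          by (simp add: algebra_simps)
        then show ?thesis by simp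
      qed
      finally show ?thesis .
    qed
    have ekn: "exp (- (\<kappa> * n)) \<le> 1 / (\<kappa> * n)"
    proof -
      have pos: "0 < \<kappa> * n" using k0 n1 by simp
      have "1 + \<kappa> * n \<le> exp (\<kappa> * n)" by (rule exp_ge_add_one_self)
      then have "\<kappa> * n < exp (\<kappa> * n)" by linarith
      then show ?thesis using pos by (simp add: exp_minus field_simps)
    qed
    have "P * (exp (- 2 * s * \<nu> * h ^ n) / \<beta>^(n+l) + exp (2 * s * h ^ (n+1)) * (2*\<beta>^(n+l+1)/(1-\<beta>)))
        = P * (exp (- 2 * s * \<nu> * h ^ n) / \<beta>^(n+l) + (2/(1-\<beta>)) * (exp (2 * s * h ^ (n+1)) * \<beta>^(n+l+1)))"
      by (simp add: field_simps)
    also have "\<dots> \<le> P * (exp (- (\<kappa> * n)) + (2/(1-\<beta>)) * exp (- (\<kappa> * n)))"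
      using t1 t2 b P by (intro mult_left_mono add_mono) auto
    also have "\<dots> = Q * exp (- (\<kappa> * n))" unfolding Q_def by (simp add: algebra_simps)
    also have "\<dots> \<le> Q * (1 / (\<kappa> * n))" using ekn Q0 by (intro mult_left_mono) auto
    also have "\<dots> \<le> \<epsilon>" using QN[OF nN] by simp
    finally show ?thesis using n1 by blast
  qed
  show ?thesis using S0 main by blast
qed



lemma rv_nonneg:
  assumes "\<forall>r\<in>{u..v}. 0 \<le> w r" "\<forall>r\<in>{u..v}. 0 < c r" "x \<in> rayleigh_values u v w c P"
  shows "0 \<le> x"
proof -
  obtain phi g where x: "x = (LINT r:{u..v}|lborel. w r * ((g r)^2 + c r * (phi r)^2))"
    using assms(3) unfolding rayleigh_values_def by blast
  have "0 \<le> w r * ((g r)^2 + c r * (phi r)^2)" if "r \<in> {u..v}" for r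
  proof -
    have "0 \<le> w r" "0 < c r" using assms(1,2) that by auto
    then show ?thesis by (intro mult_nonneg_nonneg add_nonneg_nonneg) auto
  qed
  then show ?thesis unfolding x by (rule set_nonneg)
qed

lemma rv_bdd:
  assumes "\<forall>r\<in>{u..v}. 0 \<le> w r" "\<forall>r\<in>{u..v}. 0 < c r"
  shows "bdd_below (rayleigh_values u v w c P)"
  using rv_nonneg[OF assms] by (intro bdd_belowI[of _ 0]) auto

lemma RN_nonempty:
  fixes a b :: real
  assumes ab: "0 < a" "a < b"
  shows "rayleigh_values a b (\<lambda>r. r^(d-1)) c (\<lambda>_. True) \<noteq> {}"
proof -
  define I where "I = (LINT r:{a..b}|lborel. r^(d-1))"
  have ii: "set_integrable lborel {a..b} (\<lambda>r. r^(d-1))"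
    unfolding set_integrable_def by (rule borel_integrable_compact) (auto intro!: continuous_intros)
  have "I = integral {a..b} (\<lambda>r. r^(d-1))"
    unfolding I_def by (rule set_borel_integral_eq_integral(2)[OF ii])
  also have "\<dots> \<ge> integral {a..b} (\<lambda>r. a^(d-1))"
    by (rule integral_le) (use ab in \<open>auto intro!: integrable_continuous_interval continuous_intros power_mono\<close>)
  finally have "I \<ge> (b - a) * a^(d-1)" using ab by simp
  moreover have "(b - a) * a^(d-1) > 0" using ab by simp
  ultimately have I0: "I > 0" by linarith
  define k where "k = 1 / sqrt I"
  have H: "H1_pair a b (\<lambda>_. k) (\<lambda>_. 0)"
    unfolding H1_pair_def set_integrable_def by simp
  have "(LINT r:{a..b}|lborel. r^(d-1) * k^2) = I * k^2" unfolding I_def by simp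
  also have "\<dots> = 1" unfolding k_def using I0 by (simp add: power_divide)
  finally have n: "(LINT r:{a..b}|lborel. r^(d-1) * ((\<lambda>_. k) r)^2) = 1" by simp
  have "(LINT r:{a..b}|lborel. r^(d-1) * (((\<lambda>_. 0) r)^2 + c r * ((\<lambda>_. k) r)^2))
      \<in> rayleigh_values a b (\<lambda>r. r^(d-1)) c (\<lambda>_. True)"
    unfolding rayleigh_values_def
    apply (rule CollectI)
    apply (rule exI[of _ "\<lambda>_. k"])
    apply (rule exI[of _ "\<lambda>_. 0"])
    using H n by simp
  then show ?thesis by blast
qed

lemma phiF_ab:
  assumes "X < Y" "Y < a" "a \<le> r" "r \<le> b" "a + b = 1"
  shows "phiF X Y a b psi r = psi r"
  using assms unfolding phiF_def by (cases "r = a") auto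



lemma Ebound1:
  fixes B e C p :: real
  assumes "0 < B" "B \<le> 1" "0 \<le> e" "0 \<le> C"
  shows "B * (e * ((p / B)^2 + C * p^2)) \<le> e * (p^2 * (1 + C)) / B"
proof -
  have "B * B \<le> 1 * 1" using assms by (intro mult_mono) auto
  then have B1: "B \<le> 1 / B" using assms by (simp add: field_simps)
  have "e * C * p^2 * B \<le> e * C * p^2 * (1 / B)" using B1 assms by (intro mult_left_mono) auto
  moreover have "B * (e * ((p / B)^2 + C * p^2)) = e * p^2 * (1 / B) + e * C * p^2 * B"
    using assms by (simp add: field_simps power2_eq_square)
  moreover have "e * (p^2 * (1 + C)) / B = e * p^2 * (1 / B) + e * C * p^2 * (1 / B)"
    using assms by (simp add: field_simps)
  ultimately show ?thesis by linarith
qed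

lemma Ebound2:
  fixes t T e C p :: real
  assumes "0 \<le> t" "t \<le> T" "0 \<le> e" "0 \<le> C"
  shows "t * (e * (C * p^2)) \<le> T * (e * (p^2 * (1 + C)))"
proof -
  have "e * (C * p^2) \<le> e * (p^2 * (1 + C))" using assms by (intro mult_left_mono) (auto simp: algebra_simps)
  moreover have "0 \<le> T" using assms by linarith
  moreover have "0 \<le> e * (C * p^2)" using assms by simp
  ultimately show ?thesis by (intro mult_mono[OF assms(2)])
qed

theorem lemma3p8:
  fixes d :: nat and a b :: real and m m' c :: "real \<Rightarrow> real"
  assumes "d \<ge> 1"
    and "0 < a" "a < b" "b < 1" "a + b = 1"
    and "\<forall>r\<in>{0..1}. (m has_real_derivative m' r) (at r within {0..1})"
    and "continuous_on {0..1} m'"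
    and "\<exists>x\<in>{0..1}. \<exists>y\<in>{0..1}. m x \<noteq> m y"
    and "continuous_on {0..1} c"
    and H1: "\<forall>r\<in>{0..1}. m r = m (1 - r)" "\<forall>r\<in>{a..b}. m r = 0"
    and H2: "\<forall>r\<in>{0..1}. c r > 0" "\<forall>r\<in>{0..a} \<union> {b..1}. c r > lamD d c a b"
    and "in_SN a m m'"
  shows "Limsup at_top (\<lambda>s. ereal (lam d m c s)) \<le> ereal (lamN d c a b)"
proof -
  obtain \<delta> h \<alpha> \<beta> \<nu> l where p: "0 < \<delta>" "\<delta> < a" "0 < h" "h < \<alpha>" "\<alpha> < \<beta>" "\<beta> < 1" "1 < \<nu>"
    and sm: "(\<lambda>i. \<alpha>^(Suc i + l) + \<beta>^(Suc i + l)) sums (a - \<delta>)"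
    and bs: "below_step m \<delta> h \<alpha> \<beta> \<nu> l"
    using \<open>in_SN a m m'\<close> unfolding in_SN_def by blast
  interpret S: seqs \<delta> \<alpha> \<beta> a l using p sm by unfold_locales auto
  have b1: "b = 1 - a" using assms(5) by simp
  have mcont: "continuous_on {0..1} m"
    by (rule DERIV_continuous_on) (use assms(6) in blast)
  obtain C where C: "\<forall>r\<in>{0..1}. 0 < c r \<and> c r \<le> C"
  proof -
    have "compact (c ` {0..1})" by (rule compact_continuous_image[OF assms(9)]) simp
    then have "bounded (c ` {0..1})" by (rule compact_imp_bounded)
    then obtain B where B: "\<forall>x\<in>c ` {0..1}. norm x \<le> B" unfolding bounded_iff by blast
    have "\<forall>r\<in>{0..1}. 0 < c r \<and> c r \<le> B"
    proof
      fix r :: real assume r: "r \<in> {0..1}"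
      then have "norm (c r) \<le> B" using B by blast
      then show "0 < c r \<and> c r \<le> B" using H2(1) r by auto
    qed
    then show ?thesis by (rule that)
  qed
  have C0: "0 \<le> C"
  proof -
    have "0 < c 0" "c 0 \<le> C" using C by auto
    then show ?thesis by linarith
  qed
  define RN where "RN = rayleigh_values a b (\<lambda>r. r^(d-1)) c (\<lambda>_. True)"
  have Ldef: "lamN d c a b = Inf RN" unfolding lamN_def RN_def ..
  have RNne: "RN \<noteq> {}" unfolding RN_def by (rule RN_nonempty) (use assms(2,3) in auto)
  have RNbdd: "bdd_below RN" unfolding RN_def
  proof (rule rv_bdd)
    show "\<forall>r\<in>{a..b}. 0 \<le> r^(d-1)" using assms(2) by auto
    show "\<forall>r\<in>{a..b}. 0 < c r" using H2(1) assms(2,3,4) by auto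
  qed
  have key: "\<exists>S. \<forall>s\<ge>S. lam d m c s \<le> lamN d c a b + \<epsilon>" if e: "0 < \<epsilon>" for \<epsilon>
  proof -
    have "Inf RN < lamN d c a b + \<epsilon>/2" using e Ldef by simp
    then obtain v where v: "v \<in> RN" "v < lamN d c a b + \<epsilon>/2"
      using cInf_less_iff[OF RNne RNbdd] by auto
    then obtain psi g0 where Hp: "H1_pair a b psi g0"
      and nrm: "(LINT r:{a..b}|lborel. r^(d-1) * (psi r)^2) = 1"
      and vdef: "v = (LINT r:{a..b}|lborel. r^(d-1) * ((g0 r)^2 + c r * (psi r)^2))"
      unfolding RN_def rayleigh_values_def by blast
    define P where "P = ((psi a)^2 + (psi b)^2) * (1 + C)"
    have P0: "0 \<le> P" unfolding P_def using C0 by simp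
    have hb: "0 < h" "h < 1" "0 < \<beta>" "\<beta> < 1" using p by auto
    obtain S where S: "S > 0" "\<forall>s\<ge>S. \<exists>n\<ge>1. P * (exp (- 2 * s * \<nu> * h ^ n) / \<beta>^(n+l)
            + exp (2 * s * h ^ (n+1)) * (2*\<beta>^(n+l+1)/(1-\<beta>))) \<le> \<epsilon>/2"
      using asym[OF hb p(7) P0, of "\<epsilon>/2" l] e by auto
    show ?thesis
    proof (intro exI allI impI)
      fix s assume sS: "S \<le> s"
      have s0: "0 < s" using sS S by simp
      obtain n where n1: "n \<ge> 1" and En: "P * (exp (- 2 * s * \<nu> * h ^ n) / \<beta>^(n+l)
            + exp (2 * s * h ^ (n+1)) * (2*\<beta>^(n+l+1)/(1-\<beta>))) \<le> \<epsilon>/2"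
        using S sS by blast
      define X where "X = stepX \<delta> \<alpha> \<beta> l n"
      define Y where "Y = stepY \<delta> \<alpha> \<beta> l n"
      define B where "B = \<beta>^(n+l)"
      have YX: "Y - X = B" unfolding X_def Y_def B_def stepX_def by simp
      have B0: "0 < B" "B \<le> 1" unfolding B_def using p by (auto intro: power_le_one)
      have Y0: "stepY \<delta> \<alpha> \<beta> l 0 = \<delta>" unfolding stepY_def by simp
      have X0: "0 < X"
      proof -
        have "stepY \<delta> \<alpha> \<beta> l 0 \<le> stepY \<delta> \<alpha> \<beta> l (n-1)" by (rule S.Y_mono) simp
        moreover have "0 < \<alpha>^(n+l)" using p by simp
        ultimately show ?thesis unfolding X_def S.X_eq[OF n1] Y0 using p by linarith
      qed
      have XY: "X < Y" using YX B0 by simp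
      have Ya: "Y < a" unfolding Y_def by (rule S.Y_less)
      have tail: "a - Y \<le> 2 * \<beta>^(n+l+1) / (1 - \<beta>)" unfolding Y_def by (rule S.Y_tail_bound)
      define e1 where "e1 = exp (- 2 * s * \<nu> * h ^ n)"
      define e2 where "e2 = exp (2 * s * h ^ (n+1))"
      define w where "w = (\<lambda>r. r^(d-1) * exp (2 * s * m r))"
      have bsn: "\<forall>r\<in>{X..Y}. m r \<le> -\<nu>*h^n \<and> m (1-r) \<le> -\<nu>*h^n"
        using bs n1 unfolding below_step_def X_def Y_def by blast
      have mb: "m r \<le> h^(n+1) \<and> m (1-r) \<le> h^(n+1)" if r: "Y \<le> r" "r < a" for r
      proof -
        obtain k where k: "k \<ge> n+1" "stepY \<delta> \<alpha> \<beta> l (k-1) \<le> r" "r \<le> stepY \<delta> \<alpha> \<beta> l k"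
          using S.find_k[of n r] r unfolding Y_def by blast
        have k1: "k \<ge> 1" using k by simp
        have bk: "(\<forall>r\<in>{stepY \<delta> \<alpha> \<beta> l (k-1)..stepX \<delta> \<alpha> \<beta> l k}. m r \<le> h^k \<and> m (1-r) \<le> h^k) \<and>
             (\<forall>r\<in>{stepX \<delta> \<alpha> \<beta> l k..stepY \<delta> \<alpha> \<beta> l k}. m r \<le> -\<nu>*h^k \<and> m (1-r) \<le> -\<nu>*h^k)"
          using bs k1 unfolding below_step_def by blast
        have hk: "h^k \<le> h^(n+1)" using k(1) p by (intro power_decreasing) auto
        have nh: "-\<nu>*h^k \<le> h^k"
        proof -
          have "0 \<le> h^k" "0 \<le> \<nu> * h^k" using p by auto
          then show ?thesis by linarith
        qed
        have "m r \<le> h^k \<and> m (1-r) \<le> h^k"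
        proof (cases "r \<le> stepX \<delta> \<alpha> \<beta> l k")
          case True then show ?thesis using bk k by auto
        next
          case False
          then have "r \<in> {stepX \<delta> \<alpha> \<beta> l k..stepY \<delta> \<alpha> \<beta> l k}" using k by auto
          then have "m r \<le> - \<nu> * h ^ k" "m (1 - r) \<le> - \<nu> * h ^ k" using bk by blast+
          then show ?thesis using nh by linarith
        qed
        then show ?thesis using hk by linarith
      qed
      have rpow: "0 \<le> r^(d-1)" "r^(d-1) \<le> 1" if "r \<in> {0..1}" for r :: real
        using that by (auto intro: power_le_one)
      have w0: "\<forall>r\<in>{0..1}. 0 \<le> w r" unfolding w_def using rpow by auto
      have w1: "\<forall>r\<in>{a..b}. w r = r^(d-1)" unfolding w_def using H1(2) by simp
      have wle: "w r \<le> exp (2 * s * M)" if "r \<in> {0..1}" "m r \<le> M" for r M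
      proof -
        have "exp (2 * s * m r) \<le> exp (2 * s * M)" using that s0 by simp
        then show ?thesis unfolding w_def using rpow[OF that(1)]
          by (metis mult_le_one exp_ge_zero mult_right_mono mult_1 order.trans)
      qed
      have w2: "\<forall>r\<in>{X..Y} \<union> {1-Y..1-X}. w r \<le> e1"
      proof
        fix r assume r: "r \<in> {X..Y} \<union> {1-Y..1-X}"
        have r01: "r \<in> {0..1}" using r X0 XY Ya assms(2,3,4) b1 by auto
        have "m r \<le> -\<nu>*h^n"
        proof (cases "r \<in> {X..Y}")
          case True then show ?thesis using bsn by blast
        next
          case False
          then have "1 - r \<in> {X..Y}" using r by auto
          then have "m (1 - (1 - r)) \<le> -\<nu>*h^n" using bsn by blast
          then show ?thesis by simp
        qed
        then have "w r \<le> exp (2 * s * (-\<nu>*h^n))" by (rule wle[OF r01])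
        then show "w r \<le> e1" unfolding e1_def by (simp add: algebra_simps)
      qed
      have w3: "\<forall>r\<in>{Y..a} \<union> {b..1-Y}. w r \<le> e2"
      proof
        fix r assume r: "r \<in> {Y..a} \<union> {b..1-Y}"
        have r01: "r \<in> {0..1}" using r X0 XY Ya assms(2,3,4) b1 by auto
        have hn: "0 \<le> h^(n+1)" using p by simp
        have "m r \<le> h^(n+1)"
        proof (cases "r \<in> {Y..a}")
          case True
          show ?thesis
          proof (cases "r = a")
            case True then show ?thesis using H1(2) assms(3) hn by auto
          next
            case False then show ?thesis using mb \<open>r \<in> {Y..a}\<close> by auto
          qed
        next
          case False
          then have rb: "r \<in> {b..1-Y}" using r by auto
          show ?thesis
          proof (cases "r = b")
            case True then show ?thesis using H1(2) assms(3) hn by auto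
          next
            case False
            then have "Y \<le> 1 - r" "1 - r < a" using rb b1 by auto
            then have "m (1 - (1 - r)) \<le> h^(n+1)" using mb by blast
            then show ?thesis by simp
          qed
        qed
        then have "w r \<le> exp (2 * s * h^(n+1))" by (rule wle[OF r01])
        then show "w r \<le> e2" unfolding e2_def .
      qed
      have e10: "0 \<le> e1" "0 \<le> e2" unfolding e1_def e2_def by auto
      define phi where "phi = phiF X Y a b psi"
      define g where "g = gF X Y a b psi g0"
      have Hphi: "H1_pair 0 1 phi g" unfolding phi_def g_def
        by (rule construct[OF _ XY _ assms(3) _ Hp]) (use X0 Ya b1 in auto)
      define Num where "Num = (LINT r:{0..1}|lborel. w r * ((g r)^2 + c r * (phi r)^2))"
      have numb: "Num \<le> v
       + (Y-X) * (e1 * ((psi a/(Y-X))^2 + C*(psi a)^2)) + (a-Y)*(e2*(C*(psi a)^2))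
       + (a-Y)*(e2*(C*(psi b)^2)) + (Y-X)*(e1*((psi b/(Y-X))^2 + C*(psi b)^2))"
        unfolding Num_def phi_def g_def vdef
        by (rule num_bound[OF _ XY Ya assms(3,5) Hp assms(9) C w0 w1 w2 w3]) (use X0 in auto)
      define T where "T = 2 * \<beta>^(n+l+1) / (1 - \<beta>)"
      have aY: "0 \<le> a - Y" "a - Y \<le> T" using Ya tail unfolding T_def by auto
      have E1: "(Y-X) * (e1 * ((psi a/(Y-X))^2 + C*(psi a)^2)) \<le> e1 * ((psi a)^2 * (1 + C)) / B"
        unfolding YX by (rule Ebound1[OF B0 e10(1) C0])
      have E4: "(Y-X) * (e1 * ((psi b/(Y-X))^2 + C*(psi b)^2)) \<le> e1 * ((psi b)^2 * (1 + C)) / B"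
        unfolding YX by (rule Ebound1[OF B0 e10(1) C0])
      have E2: "(a-Y)*(e2*(C*(psi a)^2)) \<le> T * (e2 * ((psi a)^2 * (1 + C)))"
        by (rule Ebound2[OF aY e10(2) C0])
      have E3: "(a-Y)*(e2*(C*(psi b)^2)) \<le> T * (e2 * ((psi b)^2 * (1 + C)))"
        by (rule Ebound2[OF aY e10(2) C0])
      have Esum: "e1 * ((psi a)^2 * (1 + C)) / B + T * (e2 * ((psi a)^2 * (1 + C)))
          + T * (e2 * ((psi b)^2 * (1 + C))) + e1 * ((psi b)^2 * (1 + C)) / B
          = P * (e1 / B + e2 * T)"
        unfolding P_def using B0 by (simp add: field_simps)
      have PE: "P * (e1 / B + e2 * T) \<le> \<epsilon>/2"
        using En unfolding e1_def e2_def B_def T_def .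
      have NumL: "Num \<le> v + \<epsilon>/2" using numb E1 E2 E3 E4 Esum PE by linarith
      have Num0: "0 \<le> Num" unfolding Num_def
      proof (rule set_nonneg)
        fix r :: real assume r: "r \<in> {0..1}"
        have "0 \<le> w r" "0 < c r" using w0 C r by auto
        then show "0 \<le> w r * ((g r)^2 + c r * (phi r)^2)"
          by (intro mult_nonneg_nonneg add_nonneg_nonneg) auto
      qed
      define D where "D = (LINT r:{0..1}|lborel. w r * (phi r)^2)"
      have phic: "continuous_on {0..1} phi" by (rule H1_facts(3)[OF Hphi])
      have wc: "continuous_on {0..1} w" unfolding w_def by (intro continuous_intros mcont)
      have Di: "set_integrable lborel {0..1} (\<lambda>r. w r * (phi r)^2)"
        unfolding set_integrable_def by (rule borel_integrable_compact) (auto intro!: continuous_intros wc phic)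
      have psic: "continuous_on {a..b} psi" by (rule H1_facts(3)[OF Hp])
      have psii: "set_integrable lborel {a..b} (\<lambda>r. r^(d-1) * (psi r)^2)"
        unfolding set_integrable_def by (rule borel_integrable_compact) (auto intro!: continuous_intros psic)
      have subab: "{a..b} \<subseteq> {0..1}" using assms(2,4) by auto
      have D1: "1 \<le> D"
      proof -
        have "1 = (LINT r:{0..1}|lborel. indicator {a..b} r * (r^(d-1) * (psi r)^2))"
          using nrm ind_restrict(2)[OF subab, of "\<lambda>r. r^(d-1) * (psi r)^2"] by simp
        also have "\<dots> \<le> D" unfolding D_def
        proof (rule set_integral_mono)
          show "set_integrable lborel {0..1} (\<lambda>r. indicator {a..b} r * (r^(d-1) * (psi r)^2))"
            using ind_restrict(1)[OF subab] psii by simp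
          show "set_integrable lborel {0..1} (\<lambda>r. w r * (phi r)^2)" by (rule Di)
          fix r :: real assume r: "r \<in> {0..1}"
          show "indicator {a..b} r * (r^(d-1) * (psi r)^2) \<le> w r * (phi r)^2"
          proof (cases "r \<in> {a..b}")
            case True
            then have "phi r = psi r" unfolding phi_def using XY Ya assms(5) by (intro phiF_ab) auto
            then show ?thesis using True w1 by simp
          next
            case False
            then show ?thesis using w0 r by simp
          qed
        qed
        finally show ?thesis .
      qed
      define k where "k = 1 / sqrt D"
      have k2: "k^2 = 1 / D" unfolding k_def using D1 by (simp add: power_divide)
      define phi1 where "phi1 = (\<lambda>x. k * phi x)"
      define g1 where "g1 = (\<lambda>x. k * g x)"
      have H1n: "H1_pair 0 1 phi1 g1" unfolding phi1_def g1_def by (rule H1_scale[OF Hphi])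
      have nrm1: "(LINT r:{0..1}|lborel. w r * (phi1 r)^2) = 1"
      proof -
        have "(LINT r:{0..1}|lborel. w r * (phi1 r)^2) = (LINT r:{0..1}|lborel. k^2 * (w r * (phi r)^2))"
          unfolding phi1_def by (simp add: power_mult_distrib algebra_simps)
        also have "\<dots> = k^2 * D" unfolding D_def by simp
        also have "\<dots> = 1" using k2 D1 by simp
        finally show ?thesis .
      qed
      define val where "val = (LINT r:{0..1}|lborel. w r * ((g1 r)^2 + c r * (phi1 r)^2))"
      have valeq: "val = Num / D"
      proof -
        have "val = (LINT r:{0..1}|lborel. k^2 * (w r * ((g r)^2 + c r * (phi r)^2)))"
          unfolding val_def phi1_def g1_def by (simp add: power_mult_distrib algebra_simps)
        also have "\<dots> = k^2 * Num" unfolding Num_def by simp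
        finally show ?thesis using k2 by simp
      qed
      have mem: "val \<in> rayleigh_values 0 1 (\<lambda>r. r^(d-1) * exp (2 * s * m r)) c (\<lambda>_. True)"
        unfolding rayleigh_values_def
        apply (rule CollectI)
        apply (rule exI[of _ phi1])
        apply (rule exI[of _ g1])
        using H1n nrm1 unfolding val_def w_def by simp
      have bdd: "bdd_below (rayleigh_values 0 1 (\<lambda>r. r^(d-1) * exp (2 * s * m r)) c (\<lambda>_. True))"
        by (rule rv_bdd) (use w0 H2(1) in \<open>auto simp: w_def\<close>)
      have "lam d m c s \<le> val" unfolding lam_def by (rule cInf_lower[OF mem bdd])
      also have "\<dots> = Num / D" by (rule valeq)
      also have "\<dots> \<le> Num" using Num0 D1 by (simp add: divide_le_eq mult_le_cancel_left1 mult_left_mono[of 1 D Num, simplified])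
      also have "\<dots> \<le> v + \<epsilon>/2" by (rule NumL)
      also have "\<dots> < lamN d c a b + \<epsilon>" using v(2) by simp
      finally show "lam d m c s \<le> lamN d c a b + \<epsilon>" by simp
    qed
  qed
  have ev: "eventually (\<lambda>s. ereal (lam d m c s) \<le> ereal (lamN d c a b) + ereal \<epsilon>) at_top"
    if e0: "0 < \<epsilon>" for \<epsilon>
  proof -
    obtain S where "\<forall>s\<ge>S. lam d m c s \<le> lamN d c a b + \<epsilon>" using key[OF e0] by blast
    then show ?thesis unfolding eventually_at_top_linorder by auto
  qed
  show ?thesis
    by (rule ereal_le_epsilon2) (rule Limsup_bounded[OF ev])
qed


end
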